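(* Let $\beta\in\mathcal{B}_3$ and write $\rho_3(\beta)=\begin{pmatrix}\mathcal{R}(t)&\mathcal{V}(t)\\\mathcal{S}(t)&\mathcal{U}(t)\end{pmatrix}$. If $\mathcal{S}(t)\equiv0$ (as a Laurent polynomial), then $\beta$ belongs to the subgroup of $\mathcal{B}_3$ generated by $\sigma_1$ and $(\sigma_1\sigma_2)^3$.
   Context: $\mathcal{B}_3$ is the braid group with generators $\sigma_1,\sigma_2$ and relation $\sigma_1\sigma_2\sigma_1=\sigma_2\sigma_1\sigma_2$. The reduced Burau representation $\rho_3:\mathcal{B}_3\to\mathrm{GL}(2,\mathbb{Z}[t,t^{-1}])$ is defined by $\sigma_1\mapsto\begin{pmatrix}-t&1\\0&1\end{pmatrix}$, $\sigma_2\mapsto\begin{pmatrix}1&0\\t&-t\end{pmatrix}$, with $t$ a formal parameter. *)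

theory Defs
  imports Main "HOL-Library.Poly_Mapping"
begin

text \<open>The ring Z[t,t^-1] is the group ring of (int,+) over int, i.e. finitely
supported maps int to int with convolution product.\<close>

type_synonym laurent = "int \<Rightarrow>\<^sub>0 int"

definition lt :: laurent where "lt = Poly_Mapping.single 1 1"
definition lt_inv :: laurent where "lt_inv = Poly_Mapping.single (-1) 1"

text \<open>(a,b,c,d) stands for the matrix with rows (a b) and (c d).\<close>
type_synonym mat2 = "laurent \<times> laurent \<times> laurent \<times> laurent"

fun mat2_mult :: "mat2 \<Rightarrow> mat2 \<Rightarrow> mat2" where
  "mat2_mult (a,b,c,d) (e,f,g,h) = (a*e + b*g, a*f + b*h, c*e + d*g, c*f + d*h)"

definition mat2_id :: mat2 where "mat2_id = (1,0,0,1)"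

fun entry_S :: "mat2 \<Rightarrow> laurent" where
  "entry_S (a,b,c,d) = c"

datatype gen = Sig1 | Sig2

text \<open>A letter (g, True) is sigma_g, (g, False) is its inverse.\<close>
type_synonym letter = "gen \<times> bool"
type_synonym word = "letter list"

fun inv_letter :: "letter \<Rightarrow> letter" where
  "inv_letter (g, e) = (g, \<not> e)"

definition inv_word :: "word \<Rightarrow> word" where
  "inv_word w = rev (map inv_letter w)"

text \<open>Equality in B_3 = <sigma1, sigma2 | sigma1 sigma2 sigma1 = sigma2 sigma1 sigma2>.\<close>
inductive braid_eq :: "word \<Rightarrow> word \<Rightarrow> bool" where
  refl: "braid_eq w w"
| sym: "braid_eq u v \<Longrightarrow> braid_eq v u"
| trans: "braid_eq u v \<Longrightarrow> braid_eq v w \<Longrightarrow> braid_eq u w"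
| cong: "braid_eq u v \<Longrightarrow> braid_eq (x @ u @ y) (x @ v @ y)"
| cancel: "braid_eq [l, inv_letter l] []"
| braid: "braid_eq [(Sig1,True),(Sig2,True),(Sig1,True)] [(Sig2,True),(Sig1,True),(Sig2,True)]"

fun burau_letter :: "letter \<Rightarrow> mat2" where
  "burau_letter (Sig1, True) = (- lt, 1, 0, 1)"
| "burau_letter (Sig1, False) = (- lt_inv, lt_inv, 0, 1)"
| "burau_letter (Sig2, True) = (1, 0, lt, - lt)"
| "burau_letter (Sig2, False) = (1, 0, 1, - lt_inv)"

fun burau :: "word \<Rightarrow> mat2" where
  "burau [] = mat2_id"
| "burau (l # w) = mat2_mult (burau_letter l) (burau w)"

definition sig1_w :: word where "sig1_w = [(Sig1, True)]"

definition delta2_w :: word where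
  "delta2_w = concat (replicate 3 [(Sig1, True), (Sig2, True)])"

definition in_sub_sig1_delta2 :: "word \<Rightarrow> bool" where
  "in_sub_sig1_delta2 w \<longleftrightarrow>
     (\<exists>ws. set ws \<subseteq> {sig1_w, inv_word sig1_w, delta2_w, inv_word delta2_w}
           \<and> braid_eq w (concat ws))"

end

theory Submission
  imports Defs
begin

definition Tw :: word where "Tw = [(Sig1,True)]"
definition Tiw :: word where "Tiw = [(Sig1,False)]"
definition xw :: word where "xw = [(Sig1,True),(Sig2,True),(Sig1,True)]"

function can :: "int \<Rightarrow> int \<Rightarrow> word" where
  "can c d = (if c = 0 then [] else if c < 0 then can (-c) (-d)
     else if \<bar>d\<bar> < c then can d (-c) @ xw
     else if d > 0 then can c (d - c) @ Tw else can c (d + c) @ Tiw)"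
  by auto
termination
  by (relation "measures [\<lambda>(c,d). nat \<bar>c\<bar>, \<lambda>(c,d). nat \<bar>d\<bar>, \<lambda>(c,d). if c < 0 then 1 else 0]") auto

declare can.simps[simp del]

lemma can_0: "can 0 d = []" by (simp add: can.simps)
lemma can_neg: "c < 0 \<Longrightarrow> can c d = can (-c) (-d)" by (subst can.simps) simp
lemma can_x: "0 < c \<Longrightarrow> \<bar>d\<bar> < c \<Longrightarrow> can c d = can d (-c) @ xw" by (subst can.simps) simp
lemma can_T: "0 < c \<Longrightarrow> c \<le> \<bar>d\<bar> \<Longrightarrow> d > 0 \<Longrightarrow> can c d = can c (d - c) @ Tw" by (subst can.simps) simp
lemma can_Ti: "0 < c \<Longrightarrow> c \<le> \<bar>d\<bar> \<Longrightarrow> d \<le> 0 \<Longrightarrow> can c d = can c (d + c) @ Tiw" by (subst can.simps) simp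
lemma can_sign: "can (-c) (-d) = can c d"
proof -
  consider "c = 0" | "c < 0" | "c > 0" by linarith
  then show ?thesis
    by cases (auto simp: can_0 can_neg)
qed

abbreviation "s1 \<equiv> (Sig1,True)"
abbreviation "s1' \<equiv> (Sig1,False)"
abbreviation "s2 \<equiv> (Sig2,True)"
abbreviation "s2' \<equiv> (Sig2,False)"

lemma beq_app: "braid_eq a b \<Longrightarrow> braid_eq c d \<Longrightarrow> braid_eq (a @ c) (b @ d)"
proof -
  assume "braid_eq a b" "braid_eq c d"
  have "braid_eq ([] @ a @ c) ([] @ b @ c)" by (rule cong) fact
  moreover have "braid_eq (b @ c @ []) (b @ d @ [])" by (rule cong) fact
  ultimately show ?thesis by (auto intro: braid_eq.trans)
qed

lemma beq_ctx: "braid_eq u v \<Longrightarrow> a = x @ u @ y \<Longrightarrow> b = x @ v @ y \<Longrightarrow> braid_eq a b"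
  using cong by blast

lemma inv_inv_letter[simp]: "inv_letter (inv_letter l) = l"
  by (cases l) simp

lemma cancel': "braid_eq [inv_letter l, l] []"
  using cancel[of "inv_letter l"] by simp

lemma inv_word_Cons: "inv_word (l # w) = inv_word w @ [inv_letter l]"
  by (simp add: inv_word_def)
lemma inv_word_Nil[simp]: "inv_word [] = []" by (simp add: inv_word_def)
lemma inv_word_append: "inv_word (u @ w) = inv_word w @ inv_word u"
  by (simp add: inv_word_def)
lemma inv_inv_word[simp]: "inv_word (inv_word w) = w"
  by (simp add: inv_word_def rev_map comp_def)

lemma beq_inv_right: "braid_eq (u @ inv_word u) []"
proof (induction u)
  case Nil then show ?case by (simp add: braid_eq.refl)
next
  case (Cons l u)
  have "braid_eq ([l] @ (u @ inv_word u) @ [inv_letter l]) ([l] @ [] @ [inv_letter l])"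
    by (rule cong) fact
  then have "braid_eq ((l # u) @ inv_word (l # u)) [l, inv_letter l]"
    by (simp add: inv_word_Cons)
  then show ?case using cancel braid_eq.trans by blast
qed

lemma beq_inv_left: "braid_eq (inv_word u @ u) []"
  using beq_inv_right[of "inv_word u"] by simp

definition Gs :: "word set" where
  "Gs = {sig1_w, inv_word sig1_w, delta2_w, inv_word delta2_w}"

definition sim :: "word \<Rightarrow> word \<Rightarrow> bool" where
  "sim a b \<longleftrightarrow> (\<exists>ws. set ws \<subseteq> Gs \<and> braid_eq a (concat ws @ b))"

lemma sim_refl: "sim a a"
  unfolding sim_def by (rule exI[of _ "[]"]) (simp add: braid_eq.refl)

lemma sim_beq: "braid_eq a b \<Longrightarrow> sim a b"
  unfolding sim_def by (rule exI[of _ "[]"]) simp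

lemma sim_trans: "sim a b \<Longrightarrow> sim b c \<Longrightarrow> sim a c"
proof -
  assume "sim a b" "sim b c"
  then obtain ws1 ws2 where 1: "set ws1 \<subseteq> Gs" "braid_eq a (concat ws1 @ b)"
    and 2: "set ws2 \<subseteq> Gs" "braid_eq b (concat ws2 @ c)" unfolding sim_def by blast
  have "braid_eq (concat ws1 @ b) (concat ws1 @ (concat ws2 @ c))"
    by (rule beq_app[OF braid_eq.refl 2(2)])
  then have "braid_eq a (concat (ws1 @ ws2) @ c)" using 1(2) braid_eq.trans by simp
  then show ?thesis unfolding sim_def using 1(1) 2(1) by (intro exI[of _ "ws1 @ ws2"]) auto
qed

lemma sim_beq_left: "braid_eq a b \<Longrightarrow> sim b c \<Longrightarrow> sim a c"
  using sim_beq sim_trans by blast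
lemma sim_beq_right: "sim a b \<Longrightarrow> braid_eq b c \<Longrightarrow> sim a c"
  using sim_beq sim_trans by blast

lemma sim_app: "sim a b \<Longrightarrow> sim (a @ u) (b @ u)"
proof -
  assume "sim a b"
  then obtain ws where 1: "set ws \<subseteq> Gs" "braid_eq a (concat ws @ b)" unfolding sim_def by blast
  have "braid_eq (a @ u) ((concat ws @ b) @ u)" by (rule beq_app[OF 1(2) braid_eq.refl])
  then show ?thesis unfolding sim_def using 1(1) by auto
qed

lemma Gs_inv: "g \<in> Gs \<Longrightarrow> inv_word g \<in> Gs"
  unfolding Gs_def by auto

lemma inv_concat: "inv_word (concat ws) = concat (rev (map inv_word ws))"
  by (induction ws) (simp_all add: inv_word_append)

lemma sim_sym: "sim a b \<Longrightarrow> sim b a"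
proof -
  assume "sim a b"
  then obtain ws where 1: "set ws \<subseteq> Gs" "braid_eq a (concat ws @ b)" unfolding sim_def by blast
  let ?h = "concat ws"
  have "braid_eq ((inv_word ?h @ ?h) @ b) ([] @ b)" by (rule beq_app[OF beq_inv_left braid_eq.refl])
  then have e1: "braid_eq b (inv_word ?h @ (?h @ b))" by (simp add: braid_eq.sym)
  have "braid_eq (inv_word ?h @ a) (inv_word ?h @ (?h @ b))" by (rule beq_app[OF braid_eq.refl 1(2)])
  then have "braid_eq b (inv_word ?h @ a)" using e1 braid_eq.sym braid_eq.trans by blast
  then have "braid_eq b (concat (rev (map inv_word ws)) @ a)" by (simp add: inv_concat)
  moreover have "set (rev (map inv_word ws)) \<subseteq> Gs" using 1(1) Gs_inv by auto
  ultimately show ?thesis unfolding sim_def by blast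
qed

lemma sim_G: "g \<in> Gs \<Longrightarrow> sim (g @ w) w"
  unfolding sim_def by (rule exI[of _ "[g]"]) (simp add: braid_eq.refl)

lemma xs1: "braid_eq ([s1] @ xw) (xw @ [s2])"
  unfolding xw_def by (rule beq_ctx[OF braid, of _ "[s1]" "[]"]) simp_all
lemma xs2: "braid_eq ([s2] @ xw) (xw @ [s1])"
  unfolding xw_def by (rule beq_ctx[OF braid_eq.sym[OF braid], of _ "[]" "[s1]"]) simp_all

lemma comm_s1: "braid_eq ([s1] @ xw @ xw) (xw @ xw @ [s1])"
proof -
  have "braid_eq (([s1] @ xw) @ xw) ((xw @ [s2]) @ xw)" by (rule beq_app[OF xs1 braid_eq.refl])
  moreover have "braid_eq (xw @ ([s2] @ xw)) (xw @ (xw @ [s1]))" by (rule beq_app[OF braid_eq.refl xs2])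
  ultimately show ?thesis using braid_eq.trans by simp
qed
lemma comm_s2: "braid_eq ([s2] @ xw @ xw) (xw @ xw @ [s2])"
proof -
  have "braid_eq (([s2] @ xw) @ xw) ((xw @ [s1]) @ xw)" by (rule beq_app[OF xs2 braid_eq.refl])
  moreover have "braid_eq (xw @ ([s1] @ xw)) (xw @ (xw @ [s2]))" by (rule beq_app[OF braid_eq.refl xs1])
  ultimately show ?thesis using braid_eq.trans by simp
qed

lemma comm_inv: "braid_eq ([l] @ z) (z @ [l]) \<Longrightarrow> braid_eq ([inv_letter l] @ z) (z @ [inv_letter l])"
proof -
  assume h: "braid_eq ([l] @ z) (z @ [l])"
  have "braid_eq ([inv_letter l] @ z @ [l, inv_letter l]) ([inv_letter l] @ z @ [])"
    by (rule beq_ctx[OF cancel[of l], of _ "[inv_letter l] @ z" "[]"]) simp_all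
  then have e1: "braid_eq ([inv_letter l] @ z) ([inv_letter l] @ z @ [l, inv_letter l])"
    by (simp add: braid_eq.sym)
  have "braid_eq ([inv_letter l] @ (z @ [l]) @ [inv_letter l]) ([inv_letter l] @ ([l] @ z) @ [inv_letter l])"
    by (rule cong) (rule braid_eq.sym[OF h])
  then have e2: "braid_eq ([inv_letter l] @ z @ [l, inv_letter l]) ([inv_letter l, l] @ z @ [inv_letter l])"
    by simp
  have e3: "braid_eq ([] @ [inv_letter l, l] @ (z @ [inv_letter l])) ([] @ [] @ (z @ [inv_letter l]))"
    by (rule cong) (rule cancel')
  show ?thesis using e1 e2 e3 braid_eq.trans by simp
qed

lemma comm_letter: "braid_eq ([l] @ xw @ xw) (xw @ xw @ [l])"
proof -
  obtain g e where l: "l = (g, e)" by (cases l)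
  show ?thesis
  proof (cases g; cases e)
    assume "g = Sig1" "e" then show ?thesis using comm_s1 l by simp
  next
    assume "g = Sig1" "\<not> e" then show ?thesis using comm_inv[of s1 "xw @ xw"] comm_s1 l by simp
  next
    assume "g = Sig2" "e" then show ?thesis using comm_s2 l by simp
  next
    assume "g = Sig2" "\<not> e" then show ?thesis using comm_inv[of s2 "xw @ xw"] comm_s2 l by simp
  qed
qed

lemma comm_word: "braid_eq (w @ xw @ xw) (xw @ xw @ w)"
proof (induction w)
  case Nil then show ?case by (simp add: braid_eq.refl)
next
  case (Cons l w)
  have "braid_eq ([l] @ (w @ xw @ xw)) ([l] @ (xw @ xw @ w))" by (rule beq_app[OF braid_eq.refl Cons])
  moreover have "braid_eq (([l] @ xw @ xw) @ w) ((xw @ xw @ [l]) @ w)" by (rule beq_app[OF comm_letter braid_eq.refl])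
  ultimately show ?case using braid_eq.trans by simp
qed

lemma xx_delta: "braid_eq (xw @ xw) delta2_w"
  unfolding xw_def delta2_w_def numeral_3_eq_3
  by (rule beq_ctx[OF braid, of _ "[s1,s2,s1]" "[]"]) simp_all

lemma sim_xx: "sim (w @ xw @ xw) w"
proof -
  have "braid_eq (w @ xw @ xw) (delta2_w @ w)"
    using comm_word beq_app[OF xx_delta braid_eq.refl[of w]] braid_eq.trans by simp blast
  moreover have "sim (delta2_w @ w) w" by (rule sim_G) (simp add: Gs_def)
  ultimately show ?thesis using sim_beq_left by blast
qed

lemma TxT: "braid_eq (Tw @ xw @ Tw) (xw @ Tiw @ xw)"
proof -
  have a: "braid_eq (Tw @ xw @ Tw) [s1,s2,s1,s2,s1]"
    unfolding Tw_def xw_def by (rule beq_ctx[OF braid, of _ "[s1]" "[s1]"]) simp_all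
  have b: "braid_eq (xw @ Tiw @ xw) [s1,s2,s1,s2,s1]"
    unfolding Tiw_def xw_def by (rule beq_ctx[OF cancel[of s1], of _ "[s1,s2]" "[s1,s2,s1]"]) simp_all
  show ?thesis using a b braid_eq.sym braid_eq.trans by blast
qed

lemma s2_eq: "braid_eq [s2] (Tiw @ xw @ Tiw)"
proof -
  have a: "braid_eq (Tiw @ xw @ Tiw) [s2,s1,s1']"
    unfolding Tiw_def xw_def by (rule beq_ctx[OF cancel'[of s1], of _ "[]" "[s2,s1,s1']"]) simp_all
  have b: "braid_eq [s2,s1,s1'] [s2]"
    by (rule beq_ctx[OF cancel[of s1], of _ "[s2]" "[]"]) simp_all
  show ?thesis using a b braid_eq.sym braid_eq.trans by blast
qed

lemma sim_xTx: "sim (xw @ Tw @ xw) (xw @ Tiw)"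
proof -
  have e1: "braid_eq (xw @ Tw @ xw) ([s2] @ xw @ xw)"
    using beq_app[OF braid_eq.sym[OF xs2] braid_eq.refl[of xw]] by (simp add: Tw_def)
  have e2: "braid_eq ([s2] @ xw @ xw) ((Tiw @ xw @ Tiw) @ xw @ xw)"
    by (rule beq_app[OF s2_eq braid_eq.refl])
  have e3: "braid_eq ((Tiw @ xw @ Tiw) @ xw @ xw) (delta2_w @ Tiw @ xw @ Tiw)"
    using comm_word[of "Tiw @ xw @ Tiw"] beq_app[OF xx_delta braid_eq.refl[of "Tiw @ xw @ Tiw"]]
      braid_eq.trans by simp
  have s: "sim (delta2_w @ Tiw @ (xw @ Tiw)) (xw @ Tiw)"
    using sim_G[of delta2_w "Tiw @ (xw @ Tiw)"] sim_G[of Tiw "xw @ Tiw"] sim_trans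
    by (auto simp: Gs_def Tiw_def sig1_w_def inv_word_def)
  show ?thesis using e1 e2 e3 s sim_beq_left braid_eq.trans by (metis append_assoc)
qed

lemma sim_xTix: "sim (xw @ Tiw @ xw) (xw @ Tw)"
proof -
  have "sim (Tw @ (xw @ Tw)) (xw @ Tw)" by (rule sim_G) (simp add: Gs_def Tw_def sig1_w_def)
  then show ?thesis using sim_beq_left[OF braid_eq.sym[OF TxT]] by simp
qed

lemma can_c0: "0 < c \<Longrightarrow> can c 0 = xw"
  using can_x[of c 0] by (simp add: can_0)

lemma can_cc: "0 < c \<Longrightarrow> can c c = xw @ Tw"
  using can_T[of c c] can_c0[of c] by simp

lemma can_cmc: "0 < c \<Longrightarrow> can c (-c) = xw @ Tiw"
  using can_Ti[of c "-c"] can_c0[of c] by simp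

lemma x_pos: "0 < c \<Longrightarrow> sim (can c d @ xw) (can (-d) c)"
proof -
  assume c: "0 < c"
  have sg: "can (-d) c = can d (-c)" using can_sign[of d "-c"] by simp
  consider "\<bar>d\<bar> < c" | "d > c" | "d = c" | "d < -c" | "d = -c" by linarith
  then show ?thesis
  proof cases
    case 1
    then show ?thesis using can_x[OF c 1] sim_xx[of "can d (-c)"] sg by simp
  next
    case 2
    then have "can d (-c) = can (-c) (-d) @ xw" using c by (intro can_x) auto
    then show ?thesis using sg can_sign[of c d] sim_refl by simp
  next
    case 3
    then show ?thesis using sg can_cc[OF c] can_cmc[OF c] sim_xTx by simp
  next
    case 4
    then have "can (-d) c = can c d @ xw" using c can_x[of "-d" c] by simp
    then show ?thesis using sim_refl by simp
  next
    case 5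
    then show ?thesis using can_cc[OF c] can_cmc[OF c] sim_xTix by simp
  qed
qed

lemma x_lem: "(c, d) \<noteq> (0, 0) \<Longrightarrow> sim (can c d @ xw) (can (-d) c)"
proof -
  assume nz: "(c, d) \<noteq> (0, 0)"
  consider "c = 0" | "c < 0" | "c > 0" by linarith
  then show ?thesis
  proof cases
    case 1
    then have "d \<noteq> 0" using nz by simp
    then have "can (-d) 0 = xw"
    proof (cases "d < 0")
      case True then show ?thesis using can_c0[of "-d"] by simp
    next
      case False
      then have "d > 0" using \<open>d \<noteq> 0\<close> by simp
      then show ?thesis using can_neg[of "-d" 0] can_c0[of d] by simp
    qed
    then show ?thesis using 1 can_0 sim_refl by simp
  next
    case 2
    then show ?thesis using x_pos[of "-c" "-d"] can_neg[of c d] can_sign[of d "-c"] by simp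
  next
    case 3 then show ?thesis using x_pos by simp
  qed
qed

lemma T_pos: "0 < c \<Longrightarrow> sim (can c d @ Tw) (can c (c + d))"
proof -
  assume c: "0 < c"
  consider "d \<ge> 0" | "d \<le> -c" | "-c < d \<and> d < 0" by linarith
  then show ?thesis
  proof cases
    case 1
    then have "can c (c + d) = can c d @ Tw" using c can_T[of c "c + d"] by simp
    then show ?thesis using sim_refl by simp
  next
    case 2
    then have e: "can c d = can c (d + c) @ Tiw" using c by (intro can_Ti) auto
    have "braid_eq (can c (d + c) @ [s1', s1] @ []) (can c (d + c) @ [] @ [])"
      by (rule cong) (rule cancel'[of s1, simplified])
    then show ?thesis using e by (simp add: Tiw_def Tw_def add.commute sim_beq)
  next
    case 3
    have e1: "can c d = can (-d) (c + d) @ Tw @ xw"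
      using can_x[of c d] can_sign[of d "-c"] can_T[of "-d" c] c 3 by simp
    have e2: "can c (c + d) = can (c + d) d @ Tiw @ xw"
      using can_x[of c "c + d"] can_Ti[of "c + d" "-c"] c 3 by simp
    have b: "braid_eq (can c d @ Tw) (can (-d) (c + d) @ xw @ Tiw @ xw)"
      using e1 beq_app[OF braid_eq.refl[of "can (-d) (c + d)"] TxT] by simp
    have "sim ((can (-d) (c + d) @ xw) @ Tiw @ xw) (can (- (c + d)) (- d) @ Tiw @ xw)"
      by (rule sim_app, rule x_lem) (use 3 in simp)
    then have "sim (can (-d) (c + d) @ xw @ Tiw @ xw) (can c (c + d))"
      using e2 can_sign[of "c + d" d] by simp
    then show ?thesis using sim_beq_left[OF b] by simp
  qed
qed

lemma T_lem: "sim (can c d @ Tw) (can c (c + d))"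
proof -
  consider "c = 0" | "c < 0" | "c > 0" by linarith
  then show ?thesis
  proof cases
    case 1
    then show ?thesis using sim_G[of Tw "[]"] by (simp add: can_0 Gs_def Tw_def sig1_w_def)
  next
    case 2
    then show ?thesis using T_pos[of "-c" "-d"] can_neg[of c d] can_neg[of c "c + d"] by simp
  next
    case 3 then show ?thesis using T_pos by simp
  qed
qed

lemma Ti_lem: "sim (can c d @ Tiw) (can c (d - c))"
proof -
  have "sim ((can c (d - c) @ Tw) @ Tiw) (can c d @ Tiw)"
    using sim_app[OF T_lem[of c "d - c"]] by simp
  moreover have "braid_eq (can c (d - c) @ [s1, s1'] @ []) (can c (d - c) @ [] @ [])"
    by (rule cong) (rule cancel[of s1, simplified])
  ultimately have "sim (can c (d - c)) (can c d @ Tiw)"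
    using sim_beq_left[OF braid_eq.sym] by (simp add: Tw_def Tiw_def)
  then show ?thesis by (rule sim_sym)
qed

lemma s2_lem: "(c, d) \<noteq> (0, 0) \<Longrightarrow> sim (can c d @ [s2]) (can (c - d) d)"
proof -
  assume nz: "(c, d) \<noteq> (0, 0)"
  have b: "braid_eq (can c d @ [s2]) (can c d @ Tiw @ xw @ Tiw)"
    by (rule beq_app[OF braid_eq.refl s2_eq])
  have 1: "sim ((can c d @ Tiw) @ xw @ Tiw) (can c (d - c) @ xw @ Tiw)"
    by (rule sim_app[OF Ti_lem])
  have nz2: "(c, d - c) \<noteq> (0, 0)" using nz by auto
  have 2: "sim ((can c (d - c) @ xw) @ Tiw) (can (c - d) c @ Tiw)"
    using sim_app[OF x_lem[OF nz2], of Tiw] by simp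
  have 3: "sim (can (c - d) c @ Tiw) (can (c - d) d)"
    using Ti_lem[of "c - d" c] by simp
  show ?thesis using b 1 2 3 sim_trans sim_beq_left by (metis append_assoc)
qed

lemma s2i_lem: "(c, d) \<noteq> (0, 0) \<Longrightarrow> sim (can c d @ [s2']) (can (c + d) d)"
proof -
  assume nz: "(c, d) \<noteq> (0, 0)"
  then have nz2: "(c + d, d) \<noteq> (0, 0)" by auto
  have "sim ((can (c + d) d @ [s2]) @ [s2']) (can c d @ [s2'])"
    using sim_app[OF s2_lem[OF nz2], of "[s2']"] by simp
  moreover have "braid_eq (can (c + d) d @ [s2, s2'] @ []) (can (c + d) d @ [] @ [])"
    by (rule cong) (rule cancel[of s2, simplified])
  ultimately have "sim (can (c + d) d) (can c d @ [s2'])"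
    using sim_beq_left[OF braid_eq.sym] by simp
  then show ?thesis by (rule sim_sym)
qed

definition sg :: "int \<Rightarrow> int" where "sg k = (if even k then 1 else -1)"
definition ev :: "laurent \<Rightarrow> int" where
  "ev p = (\<Sum>k\<in>Poly_Mapping.keys p. Poly_Mapping.lookup p k * sg k)"

lemma sg_add: "sg (x + y) = sg x * sg y"
  unfolding sg_def by auto

lemma ev_sum: "finite S \<Longrightarrow> Poly_Mapping.keys p \<subseteq> S \<Longrightarrow>
    ev p = (\<Sum>k\<in>S. Poly_Mapping.lookup p k * sg k)"
  unfolding ev_def by (rule sum.mono_neutral_left) (auto simp: in_keys_iff)

lemma ev_diff: "ev (a - b) = ev a - ev b"
proof -
  let ?S = "Poly_Mapping.keys a \<union> Poly_Mapping.keys b"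
  have "ev (a - b) = (\<Sum>k\<in>?S. Poly_Mapping.lookup (a - b) k * sg k)"
    by (rule ev_sum) (auto simp: keys_diff[simplified])
  also have "\<dots> = (\<Sum>k\<in>?S. Poly_Mapping.lookup a k * sg k) - (\<Sum>k\<in>?S. Poly_Mapping.lookup b k * sg k)"
    by (simp add: lookup_minus left_diff_distrib sum_subtractf)
  also have "\<dots> = ev a - ev b"
    by (simp add: ev_sum[symmetric])
  finally show ?thesis .
qed

lemma ev_0[simp]: "ev 0 = 0" by (simp add: ev_def)
lemma ev_single[simp]: "ev (Poly_Mapping.single k a) = a * sg k"
  by (simp add: ev_def)
lemma ev_uminus[simp]: "ev (- a) = - ev a"
  using ev_diff[of 0 a] by simp
lemma ev_add[simp]: "ev (a + b) = ev a + ev b"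
  using ev_diff[of a "- b"] by simp

lemma ev_single_mult: "ev (Poly_Mapping.single x 1 * q) = sg x * ev q"
proof -
  have "Poly_Mapping.keys q \<subseteq> UNIV" by simp
  then show ?thesis
  proof (induction q rule: frag_induction)
    case zero then show ?case by simp
  next
    case (one y) then show ?case by (simp add: mult_single sg_add)
  next
    case (diff a b) then show ?case by (simp add: right_diff_distrib ev_diff)
  qed
qed

lemma ev_mult[simp]: "ev (p * q) = ev p * ev q"
proof -
  have "Poly_Mapping.keys p \<subseteq> UNIV" by simp
  then show ?thesis
  proof (induction p rule: frag_induction)
    case zero then show ?case by simp
  next
    case (one y) then show ?case by (simp add: ev_single_mult)
  next
    case (diff a b) then show ?case by (simp add: left_diff_distrib ev_diff)
  qed
qed

lemma ev_1[simp]: "ev 1 = 1"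
  using ev_single[of 0 1] by (simp add: sg_def)
lemma ev_lt[simp]: "ev lt = -1" by (simp add: lt_def sg_def)
lemma ev_lt_inv[simp]: "ev lt_inv = -1" by (simp add: lt_inv_def sg_def)

type_synonym imat = "int \<times> int \<times> int \<times> int"

fun imult :: "imat \<Rightarrow> imat \<Rightarrow> imat" where
  "imult (a,b,c,d) (e,f,g,h) = (a*e + b*g, a*f + b*h, c*e + d*g, c*f + d*h)"

fun evm :: "mat2 \<Rightarrow> imat" where
  "evm (a,b,c,d) = (ev a, ev b, ev c, ev d)"

fun idet :: "imat \<Rightarrow> int" where
  "idet (a,b,c,d) = a*d - b*c"

lemma evm_mult: "evm (mat2_mult A B) = imult (evm A) (evm B)"
  by (cases A; cases B) simp

lemma imult_assoc: "imult (imult A B) C = imult A (imult B C)"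
  by (cases A; cases B; cases C) (simp add: algebra_simps)

lemma imult_id: "imult (1,0,0,1) A = A" "imult A (1,0,0,1) = A"
  by (cases A; simp)+

lemma idet_mult: "idet (imult A B) = idet A * idet B"
  by (cases A; cases B) (simp add: algebra_simps)

definition IM :: "word \<Rightarrow> imat" where "IM w = evm (burau w)"

lemma IM_Nil: "IM [] = (1,0,0,1)" by (simp add: IM_def mat2_id_def)
lemma IM_Cons: "IM (l # w) = imult (evm (burau_letter l)) (IM w)"
  by (simp add: IM_def evm_mult)

lemma IM_append: "IM (w @ u) = imult (IM w) (IM u)"
  by (induction w) (simp_all add: IM_Nil IM_Cons imult_id imult_assoc)

lemma idet_letter: "idet (evm (burau_letter l)) = 1"
  by (cases l rule: burau_letter.cases) simp_all

lemma idet_IM: "idet (IM w) = 1"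
  by (induction w) (simp_all add: IM_Nil IM_Cons idet_mult idet_letter)

lemma main_sim: "IM w = (a, b, c, d) \<Longrightarrow> sim w (can c d)"
proof (induction w arbitrary: a b c d rule: rev_induct)
  case Nil then show ?case by (simp add: IM_Nil can_0 sim_refl)
next
  case (snoc l w)
  obtain a0 b0 c0 d0 where w: "IM w = (a0, b0, c0, d0)" by (cases "IM w") auto
  have ih: "sim (w @ [l]) (can c0 d0 @ [l])" using sim_app[OF snoc.IH[OF w]] .
  have "idet (IM w) = 1" by (rule idet_IM)
  then have nz: "(c0, d0) \<noteq> (0, 0)" using w by auto
  have e: "(a, b, c, d) = imult (a0, b0, c0, d0) (evm (burau_letter l))"
    using snoc.prems w by (simp add: IM_append IM_Cons IM_Nil imult_id)
  show ?case
  proof (cases l rule: burau_letter.cases)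
    case 1
    then have "c = c0" "d = c0 + d0" using e by auto
    then show ?thesis using ih T_lem[of c0 d0] 1 sim_trans by (simp add: Tw_def)
  next
    case 2
    then have "c = c0" "d = d0 - c0" using e by auto
    then show ?thesis using ih Ti_lem[of c0 d0] 2 sim_trans by (simp add: Tiw_def)
  next
    case 3
    then have "c = c0 - d0" "d = d0" using e by auto
    then show ?thesis using ih s2_lem[OF nz] 3 sim_trans by simp
  next
    case 4
    then have "c = c0 + d0" "d = d0" using e by auto
    then show ?thesis using ih s2i_lem[OF nz] 4 sim_trans by simp
  qed
qed

theorem lemma1:
  fixes \<beta> :: word
  assumes "entry_S (burau \<beta>) = 0"
  shows "in_sub_sig1_delta2 \<beta>"
proof -
  obtain a b c d where B: "burau \<beta> = (a, b, c, d)" by (cases "burau \<beta>") auto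
  then have "c = 0" using assms by simp
  then have "IM \<beta> = (ev a, ev b, 0, ev d)" using B by (simp add: IM_def)
  then have "sim \<beta> []" using main_sim can_0 by metis
  then show ?thesis unfolding sim_def in_sub_sig1_delta2_def Gs_def by simp
qed

end
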